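(* Let $\varphi_1$ and $\varphi_2$ be two $\mathbb{T}$-gains on a connected graph $G$ with $n$ vertices and $m$ edges. Let $T$ be a normal spanning tree of $G$ and let $\overrightarrow{C_j(T)}$, $j=1,\dots,m-n+1$, be the directed fundamental cycles in the suitably oriented graph $\overrightarrow{G_T}$. Then $\varphi_1(\overrightarrow{C_j(T)})=\varphi_2(\overrightarrow{C_j(T)})$ for all $j=1,\dots,m-n+1$ if and only if $\varphi_1(\overrightarrow{C})=\varphi_2(\overrightarrow{C})$ for every cycle $C$ of $G$ (with $\overrightarrow{C}$ a directed version of $C$).
   Context: Graphs are finite, simple and undirected. $\mathbb{T}=\{z\in\mathbb{C}:|z|=1\}$. Each edge $e_{st}$ of $G$ gives two oriented edges $\overrightarrow{e_{st}}$ and $\overrightarrow{e_{ts}}$. A $\mathbb{T}$-gain on $G$ is a map $\varphi$ from the set of oriented edges to $\mathbb{T}$ with $\varphi(\overrightarrow{e_{ts}})=\varphi(\overrightarrow{e_{st}})^{-1}$; $\Phi=(G,\varphi)$ is then a $\mathbb{T}$-gain graph. The gain of a directed cycle $v_1\to v_2\to\cdots\to v_k\to v_1$ is $\varphi(\overrightarrow{e_{12}})\varphi(\overrightarrow{e_{23}})\cdots\varphi(\overrightarrow{e_{k1}})$; the two directions of a cycle have conjugate gains. A rooted spanning tree $T$ with root $v_r$ induces the tree order: $v_x\le v_y$ iff $v_x$ lies on the path in $T$ from $v_r$ to $v_y$. $T$ is a normal spanning tree if any two adjacent vertices of $G$ are comparable in the tree order. The suitably oriented graph $\overrightarrow{G_T}$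 orients each edge $e_{st}$ with $v_s\le v_t$ as $\overrightarrow{e_{st}}$ if $e_{st}\in E(T)$ and as $\overrightarrow{e_{ts}}$ if $e_{st}\notin E(T)$. Each of the $m-n+1$ edges not in $T$ creates a unique cycle with $T$ (a fundamental cycle $C_j(T)$); in $\overrightarrow{G_T}$ each fundamental cycle is a directed cycle, denoted $\overrightarrow{C_j(T)}$ (the directed fundamental cycles). *)

theory Defs
  imports Complex_Main
begin

text \<open>A finite simple graph: vertex set V, edge set E given as a symmetric,
irreflexive relation on V (each undirected edge e_st appears as (s,t) and (t,s),
which are at the same time its two orientations).\<close>
definition simple_graph :: "'a set \<Rightarrow> ('a \<times> 'a) set \<Rightarrow> bool" where
  "simple_graph V E \<longleftrightarrow> finite V \<and> E \<subseteq> V \<times> V \<and> sym E \<and> irrefl E"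

definition is_path :: "('a \<times> 'a) set \<Rightarrow> 'a list \<Rightarrow> bool" where
  "is_path E p \<longleftrightarrow> p \<noteq> [] \<and> distinct p \<and> (\<forall>i. Suc i < length p \<longrightarrow> (p ! i, p ! Suc i) \<in> E)"

definition path_from_to :: "('a \<times> 'a) set \<Rightarrow> 'a \<Rightarrow> 'a \<Rightarrow> 'a list \<Rightarrow> bool" where
  "path_from_to E x y p \<longleftrightarrow> is_path E p \<and> hd p = x \<and> last p = y"

definition connected_graph :: "'a set \<Rightarrow> ('a \<times> 'a) set \<Rightarrow> bool" where
  "connected_graph V E \<longleftrightarrow> V \<noteq> {} \<and> (\<forall>x\<in>V. \<forall>y\<in>V. \<exists>p. path_from_to E x y p)"

text \<open>A directed cycle v_1 -> v_2 -> ... -> v_k -> v_1 (k >= 3, distinct vertices).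
The same list read in the two directions gives the two directed versions of the cycle.\<close>
definition is_cycle :: "('a \<times> 'a) set \<Rightarrow> 'a list \<Rightarrow> bool" where
  "is_cycle E c \<longleftrightarrow> length c \<ge> 3 \<and> distinct c \<and>
     (\<forall>i < length c. (c ! i, c ! ((Suc i) mod length c)) \<in> E)"

definition T_gain :: "('a \<times> 'a) set \<Rightarrow> ('a \<Rightarrow> 'a \<Rightarrow> complex) \<Rightarrow> bool" where
  "T_gain E \<phi> \<longleftrightarrow> (\<forall>(u,v)\<in>E. cmod (\<phi> u v) = 1 \<and> \<phi> v u = inverse (\<phi> u v))"

definition cycle_gain :: "('a \<Rightarrow> 'a \<Rightarrow> complex) \<Rightarrow> 'a list \<Rightarrow> complex" where
  "cycle_gain \<phi> c = (\<Prod>i<length c. \<phi> (c ! i) (c ! ((Suc i) mod length c)))"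

definition spanning_tree :: "'a set \<Rightarrow> ('a \<times> 'a) set \<Rightarrow> ('a \<times> 'a) set \<Rightarrow> bool" where
  "spanning_tree V E T \<longleftrightarrow> T \<subseteq> E \<and> sym T \<and> connected_graph V T \<and> (\<nexists>c. is_cycle T c)"

definition tree_path :: "('a \<times> 'a) set \<Rightarrow> 'a \<Rightarrow> 'a \<Rightarrow> 'a list" where
  "tree_path T x y = (THE p. path_from_to T x y p)"

definition tree_le :: "('a \<times> 'a) set \<Rightarrow> 'a \<Rightarrow> 'a \<Rightarrow> 'a \<Rightarrow> bool" where
  "tree_le T r x y \<longleftrightarrow> x \<in> set (tree_path T r y)"

definition normal_spanning_tree :: "'a set \<Rightarrow> ('a \<times> 'a) set \<Rightarrow> ('a \<times> 'a) set \<Rightarrow> 'a \<Rightarrow> bool" where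
  "normal_spanning_tree V E T r \<longleftrightarrow> spanning_tree V E T \<and> r \<in> V \<and>
     (\<forall>(x,y)\<in>E. tree_le T r x y \<or> tree_le T r y x)"

text \<open>Directed fundamental cycles in the suitably oriented graph G_T: for a non-tree
edge e_st with v_s \<le> v_t, tree edges are oriented away from the root and the non-tree edge
as t -> s, so the directed fundamental cycle is s -> (tree path) -> t -> s, i.e. the
closed walk given by the list tree_path T s t.\<close>
definition directed_fundamental_cycles ::
  "('a \<times> 'a) set \<Rightarrow> ('a \<times> 'a) set \<Rightarrow> 'a \<Rightarrow> 'a list set" where
  "directed_fundamental_cycles E T r =
     {tree_path T s t | s t. (s, t) \<in> E - T \<and> tree_le T r s t}"

end

theory Submission imports Defs begin

abbreviation "R E \<equiv> (\<lambda>x y. (x,y) \<in> E)"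

lemma is_path_succ: "is_path E p \<longleftrightarrow> p \<noteq> [] \<and> distinct p \<and> successively (R E) p"
  unfolding is_path_def successively_conv_nth by blast

lemma is_cycle_of_path:
  assumes "is_path E c" "length c \<ge> 3" "(last c, hd c) \<in> E"
  shows "is_cycle E c"
  unfolding is_cycle_def
proof (intro conjI allI impI)
  show "3 \<le> length c" "distinct c" using assms is_path_def by auto
  fix i assume i: "i < length c"
  show "(c ! i, c ! (Suc i mod length c)) \<in> E"
  proof (cases "Suc i < length c")
    case True then show ?thesis using assms(1) is_path_def by auto
  next
    case False
    then have "Suc i = length c" using i by auto
    then show ?thesis using assms(3) i
      by (metis Suc_n_not_le_n assms(2) hd_conv_nth last_conv_nth le_Suc_eq le_zero_eq
          list.size(3) mod_self numeral_3_eq_3 diff_Suc_1)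
  qed
qed

lemma succ_take: "successively P xs \<Longrightarrow> successively P (take n xs)"
  by (metis append_take_drop_id successively_append_iff)

lemma last_take_Suc: "i < length xs \<Longrightarrow> last (take (Suc i) xs) = xs ! i"
  by (subst last_conv_nth) (auto simp: min_def intro: arg_cong[where f="(!) xs"])

lemma path_unique:
  assumes sym: "sym T" and nc: "\<nexists>c. is_cycle T c"
  shows "path_from_to T x y p \<Longrightarrow> path_from_to T x y q \<Longrightarrow> p = q"
proof (induction p arbitrary: x q)
  case Nil then show ?case by (simp add: path_from_to_def is_path_def)
next
  case (Cons x0 p')
  have x0: "x0 = x" using Cons.prems by (simp add: path_from_to_def)
  obtain q' where q: "q = x # q'" using Cons.prems
    by (metis is_path_def list.collapse path_from_to_def)
  have pp: "p' \<noteq> [] \<Longrightarrow> path_from_to T (hd p') y p'" using Cons.prems(1)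
    by (auto simp: path_from_to_def is_path_succ successively_Cons)
  have qq: "q' \<noteq> [] \<Longrightarrow> path_from_to T (hd q') y q'" using Cons.prems(2) q
    by (auto simp: path_from_to_def is_path_succ successively_Cons)
  show ?case
  proof (cases "p' = []")
    case True
    then have "y = x" using Cons.prems x0 by (simp add: path_from_to_def)
    then have "q' = []" using Cons.prems(2) q
      by (auto simp: path_from_to_def is_path_def split: if_splits dest: last_in_set)
    then show ?thesis using True q x0 by simp
  next
    case pne: False
    show ?thesis
    proof (cases "q' = []")
      case True
      then have "y = x" using Cons.prems q by (simp add: path_from_to_def)
      then have False using Cons.prems(1) pne x0
        by (auto simp: path_from_to_def is_path_def)
      then show ?thesis ..
    next
      case qne: False
      show ?thesis
      proof (cases "hd p' = hd q'")
        case True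
        then show ?thesis using Cons.IH[OF pp[OF pne]] qq[OF qne] q x0 by simp
      next
        case False
        define a where "a = hd p'"
        define b where "b = hd q'"
        have ab: "a \<noteq> b" using False a_def b_def by simp
        have dp: "distinct (x # p')" and dq: "distinct (x # q')"
          using Cons.prems q x0 by (auto simp: path_from_to_def is_path_def)
        have sp: "successively (R T) (x # p')" and sq: "successively (R T) (x # q')"
          using Cons.prems q x0 by (auto simp: path_from_to_def is_path_succ)
        have lp: "last p' = y" and lq: "last q' = y"
          using Cons.prems q x0 pne qne by (auto simp: path_from_to_def)
        have ex: "\<exists>j. j < length q' \<and> q' ! j \<in> set p'"
          using lq lp pne qne by (metis last_conv_nth last_in_set length_greater_0_conv diff_less zero_less_one)
        define j where "j = (LEAST j. j < length q' \<and> q' ! j \<in> set p')"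
        have j: "j < length q'" "q' ! j \<in> set p'"
          using LeastI_ex[OF ex] j_def by auto
        have jmin: "\<And>k. k < j \<Longrightarrow> q' ! k \<notin> set p'"
          using not_less_Least j_def j(1) by (metis order.strict_trans)
        obtain i where i: "i < length p'" "p' ! i = q' ! j" using j(2) by (metis in_set_conv_nth)
        define A where "A = take (Suc i) p'"
        define B where "B = rev (take j q')"
        define c where "c = x # A @ B"
        have disj: "set A \<inter> set B = {}"
          using jmin by (auto simp: A_def B_def in_set_conv_nth dest: set_take_subset[THEN subsetD]) metis
        have pA: "is_path T A" "A \<noteq> []" "hd A = a" "last A = q' ! j"
          using dp sp pne i by (auto simp: A_def is_path_succ a_def hd_take last_take_Suc succ_take successively_Cons)
        have sB: "successively (R T) B" using sq sym
          by (auto simp: B_def successively_Cons intro!: succ_take elim!: successively_mono dest: symD)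
        have dB: "distinct B" using dq by (simp add: B_def)
        have xA: "x \<notin> set A" using dp by (auto simp: A_def dest: set_take_subset[THEN subsetD])
        have xB: "x \<notin> set B" using dq by (auto simp: B_def dest: set_take_subset[THEN subsetD])
        have junc: "B \<noteq> [] \<Longrightarrow> (last A, hd B) \<in> T"
        proof -
          assume "B \<noteq> []"
          then have j0: "j > 0" by (auto simp: B_def)
          have "(q' ! (j - 1), q' ! j) \<in> T" using sq j j0 qne
            using successively_nth[of "R T" q' "j-1"] by (simp add: successively_Cons)
          moreover have "hd B = q' ! (j - 1)" using j j0
            using last_take_Suc[of "j-1" q'] by (simp add: B_def hd_rev)
          ultimately show ?thesis using pA sym by (auto dest: symD)
        qed
        have lastc: "last c = b"
        proof (cases "j = 0")
          case True then show ?thesis using pA qne by (simp add: c_def B_def b_def hd_conv_nth)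
        next
          case False then show ?thesis using qne by (simp add: c_def B_def b_def last_rev hd_take)
        qed
        have pc: "is_path T c" using pA sB dB xA xB disj junc dp sp pne
          by (auto simp: c_def is_path_succ successively_append_iff successively_Cons a_def)
        have xb: "(x, b) \<in> T" using sq qne by (auto simp: b_def successively_Cons)
        have lenc: "length c \<ge> 3"
        proof (cases "j = 0")
          case True
          have "i \<noteq> 0" using True i ab pne qne by (auto simp: a_def b_def hd_conv_nth) (metis gr0I)
          then show ?thesis using True i by (simp add: c_def A_def B_def)
        next
          case False then show ?thesis using i j by (simp add: c_def A_def B_def)
        qed
        have "is_cycle T c"
          using is_cycle_of_path[OF pc lenc] lastc xb sym by (auto simp: c_def dest: symD)
        then show ?thesis using nc by blast
      qed
    qed
  qed
qed
fun pg :: "('a \<Rightarrow> 'a \<Rightarrow> complex) \<Rightarrow> 'a list \<Rightarrow> complex" where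
  "pg \<phi> (x # y # xs) = \<phi> x y * pg \<phi> (y # xs)"
| "pg \<phi> _ = 1"

lemma pg_Cons: "pg \<phi> (x # xs) = (if xs = [] then 1 else \<phi> x (hd xs) * pg \<phi> xs)"
  by (cases xs) auto

lemma pg_append: "pg \<phi> (a @ s # b) = pg \<phi> (a @ [s]) * pg \<phi> (s # b)"
  by (induction a) (auto simp: pg_Cons hd_append)

lemma pg_prod: "pg \<phi> xs = (\<Prod>i<length xs - 1. \<phi> (xs ! i) (xs ! Suc i))"
proof (induction xs)
  case Nil then show ?case by simp
next
  case (Cons x xs)
  show ?case
  proof (cases xs)
    case Nil then show ?thesis by simp
  next
    case (Cons y ys)
    then show ?thesis using Cons.IH by (simp add: prod.lessThan_Suc_shift del: prod.lessThan_Suc)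
  qed
qed

lemma cycle_gain_pg:
  assumes "c \<noteq> []"
  shows "cycle_gain \<phi> c = pg \<phi> c * \<phi> (last c) (hd c)"
proof -
  obtain m where m: "length c = Suc m" using assms by (cases c) auto
  have "cycle_gain \<phi> c = (\<Prod>i<m. \<phi> (c ! i) (c ! (Suc i mod length c))) * \<phi> (c ! m) (c ! (Suc m mod length c))"
    unfolding cycle_gain_def m by simp
  also have "(\<Prod>i<m. \<phi> (c ! i) (c ! (Suc i mod length c))) = (\<Prod>i<m. \<phi> (c ! i) (c ! Suc i))"
    by (rule prod.cong) (auto simp: m)
  also have "\<dots> = pg \<phi> c" by (simp add: pg_prod m)
  also have "\<phi> (c ! m) (c ! (Suc m mod length c)) = \<phi> (last c) (hd c)"
    using assms m by (simp add: last_conv_nth hd_conv_nth)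
  finally show ?thesis .
qed

lemma pg_nz: "successively (\<lambda>u v. \<psi> u v \<noteq> 0) p \<Longrightarrow> pg \<psi> p \<noteq> 0"
  by (induction \<psi> p rule: pg.induct) auto

lemma pg_tele: "successively (\<lambda>u v. \<psi> u v = f v / f u) p \<Longrightarrow> p \<noteq> [] \<Longrightarrow> (\<forall>v\<in>set p. f v \<noteq> 0)
  \<Longrightarrow> pg \<psi> p = f (last p) / f (hd p)"
  by (induction \<psi> p rule: pg.induct) auto

lemma cycle_gain_div: "cycle_gain (\<lambda>u v. \<phi>1 u v / \<phi>2 u v) c = cycle_gain \<phi>1 c / cycle_gain \<phi>2 c"
  unfolding cycle_gain_def by (simp add: prod_dividef)

theorem theorem3p1:
  fixes V :: "'a set" and E T :: "('a \<times> 'a) set" and r :: 'a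
    and \<phi>1 \<phi>2 :: "'a \<Rightarrow> 'a \<Rightarrow> complex"
  assumes "simple_graph V E" and "connected_graph V E"
    and "T_gain E \<phi>1" and "T_gain E \<phi>2"
    and "normal_spanning_tree V E T r"
  shows "(\<forall>C \<in> directed_fundamental_cycles E T r. cycle_gain \<phi>1 C = cycle_gain \<phi>2 C)
     \<longleftrightarrow> (\<forall>C. is_cycle E C \<longrightarrow> cycle_gain \<phi>1 C = cycle_gain \<phi>2 C)"
proof -
  have ST: "T \<subseteq> E" "sym T" "connected_graph V T" "\<nexists>c. is_cycle T c" and rV: "r \<in> V"
    and norm: "\<forall>(x,y)\<in>E. tree_le T r x y \<or> tree_le T r y x"
    using assms(5) by (auto simp: normal_spanning_tree_def spanning_tree_def)
  have EV: "E \<subseteq> V \<times> V" and symE: "sym E" and irr: "irrefl E"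
    using assms(1) by (auto simp: simple_graph_def)
  have tpu: "\<And>x y p. path_from_to T x y p \<Longrightarrow> tree_path T x y = p"
    unfolding tree_path_def using path_unique[OF ST(2,4)] by blast
  have tp: "\<And>x y. x \<in> V \<Longrightarrow> y \<in> V \<Longrightarrow> path_from_to T x y (tree_path T x y)"
    using ST(3) tpu unfolding connected_graph_def by metis
  have pathE: "\<And>p. is_path T p \<Longrightarrow> is_path E p" using ST(1) by (auto simp: is_path_def)
  have nz1: "\<And>u v. (u,v) \<in> E \<Longrightarrow> \<phi>1 u v \<noteq> 0" and nz2: "\<And>u v. (u,v) \<in> E \<Longrightarrow> \<phi>2 u v \<noteq> 0"
    using assms(3,4) by (auto simp: T_gain_def)
  have inv1: "\<And>u v. (u,v) \<in> E \<Longrightarrow> \<phi>1 v u = inverse (\<phi>1 u v)"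
    and inv2: "\<And>u v. (u,v) \<in> E \<Longrightarrow> \<phi>2 v u = inverse (\<phi>2 u v)"
    using assms(3,4) by (auto simp: T_gain_def)
  define \<psi> where "\<psi> = (\<lambda>u v. \<phi>1 u v / \<phi>2 u v)"
  have psinz: "\<And>u v. (u,v) \<in> E \<Longrightarrow> \<psi> u v \<noteq> 0" using nz1 nz2 by (simp add: \<psi>_def)
  have psiinv: "\<And>u v. (u,v) \<in> E \<Longrightarrow> \<psi> v u = inverse (\<psi> u v)"
    using inv1 inv2 by (simp add: \<psi>_def divide_inverse mult.commute)
  have eqiff: "cycle_gain \<phi>1 c = cycle_gain \<phi>2 c \<longleftrightarrow> cycle_gain \<psi> c = 1"
    if "is_cycle E c" for c
  proof -
    have "cycle_gain \<phi>2 c \<noteq> 0" using that nz2 unfolding is_cycle_def cycle_gain_def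
      by (simp add: prod_zero_iff)
    then show ?thesis unfolding \<psi>_def cycle_gain_div by simp
  qed
  have fund: "is_cycle E (tree_path T s t)" if st: "(s,t) \<in> E" "(s,t) \<notin> T" for s t
  proof -
    have sV: "s \<in> V" "t \<in> V" using st EV by auto
    have neq: "s \<noteq> t" using st irr by (auto simp: irrefl_def)
    let ?p = "tree_path T s t"
    have p: "is_path T ?p" "hd ?p = s" "last ?p = t" using tp[OF sV] by (auto simp: path_from_to_def)
    have "length ?p \<ge> 3"
    proof (rule ccontr)
      assume "\<not> ?thesis"
      then consider "length ?p = 0" | "length ?p = 1" | "length ?p = 2" by linarith
      then show False
      proof cases
        case 1 then show ?thesis using p by (simp add: is_path_def)
      next
        case 2 then show ?thesis using p neq by (cases ?p) auto
      next
        case 3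
        then obtain a b where "?p = [a, b]" by (auto simp: length_Suc_conv numeral_2_eq_2)
        then show ?thesis using p st by (auto simp: is_path_def)
      qed
    qed
    moreover have "(last ?p, hd ?p) \<in> E" using p st symE by (auto dest: symD)
    ultimately show ?thesis using is_cycle_of_path pathE p(1) by blast
  qed
  show ?thesis
  proof
    assume H: "\<forall>C \<in> directed_fundamental_cycles E T r. cycle_gain \<phi>1 C = cycle_gain \<phi>2 C"
    have fc: "cycle_gain \<psi> (tree_path T s t) = 1" if "(s,t) \<in> E" "(s,t) \<notin> T" "tree_le T r s t" for s t
      using H that eqiff[OF fund[OF that(1,2)]] unfolding directed_fundamental_cycles_def by blast
    define f where "f v = pg \<psi> (tree_path T r v)" for v
    have fnz: "f v \<noteq> 0" if "v \<in> V" for v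
    proof -
      have "is_path E (tree_path T r v)" using tp[OF rV that] pathE by (auto simp: path_from_to_def)
      then show ?thesis unfolding f_def
        by (intro pg_nz) (auto simp: is_path_succ psinz elim!: successively_mono)
    qed
    have key: "f t = f s * \<psi> s t" if st: "(s,t) \<in> E" "tree_le T r s t" for s t
    proof -
      have sV: "s \<in> V" "t \<in> V" using st EV by auto
      let ?p = "tree_path T r t"
      have p: "path_from_to T r t ?p" using tp[OF rV sV(2)] .
      have "s \<in> set ?p" using st(2) by (simp add: tree_le_def)
      then obtain a b where ab: "?p = a @ s # b" by (meson split_list)
      have p1: "path_from_to T r s (a @ [s])" and p2: "path_from_to T s t (s # b)"
        using p unfolding ab by (auto simp: path_from_to_def is_path_succ successively_append_iff hd_append)
      have "f t = f s * pg \<psi> (tree_path T s t)"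
        unfolding f_def ab tpu[OF p1] tpu[OF p2] by (rule pg_append)
      moreover have "pg \<psi> (tree_path T s t) = \<psi> s t"
      proof (cases "(s,t) \<in> T")
        case True
        have "s \<noteq> t" using st irr by (auto simp: irrefl_def)
        then have "path_from_to T s t [s,t]" using True by (auto simp: path_from_to_def is_path_def nth_Cons split: nat.splits)
        then show ?thesis using tpu by simp
      next
        case False
        let ?q = "tree_path T s t"
        have q: "?q \<noteq> []" "hd ?q = s" "last ?q = t" using tp[OF sV] by (auto simp: path_from_to_def is_path_def)
        have "pg \<psi> ?q * \<psi> t s = 1" using fc[OF st(1) False st(2)] cycle_gain_pg[OF q(1)] q by simp
        then show ?thesis using psiinv[OF st(1)] psinz[OF st(1)] by (simp add: field_simps)
      qed
      ultimately show ?thesis by simp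
    qed
    have edge: "\<psi> u v = f v / f u" if uv: "(u,v) \<in> E" for u v
    proof -
      have V: "u \<in> V" "v \<in> V" using uv EV by auto
      have vu: "(v,u) \<in> E" using uv symE by (auto dest: symD)
      from norm uv have "tree_le T r u v \<or> tree_le T r v u" by auto
      then show ?thesis
      proof
        assume "tree_le T r u v" then show ?thesis using key[OF uv] fnz V by (simp add: field_simps)
      next
        assume "tree_le T r v u"
        then have "f u = f v * \<psi> v u" using key[OF vu] by simp
        then show ?thesis using psiinv[OF uv] fnz V psinz[OF uv] by (simp add: field_simps)
      qed
    qed
    show "\<forall>C. is_cycle E C \<longrightarrow> cycle_gain \<phi>1 C = cycle_gain \<phi>2 C"
    proof (intro allI impI)
      fix C assume C: "is_cycle E C"
      have ne: "C \<noteq> []" using C by (auto simp: is_cycle_def)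
      have pC: "successively (R E) C"
        using C unfolding is_cycle_def successively_conv_nth by (metis Suc_lessD mod_less)
      have CV: "set C \<subseteq> V"
      proof
        fix v assume "v \<in> set C"
        then obtain i where "i < length C" "C ! i = v" by (auto simp: in_set_conv_nth)
        then show "v \<in> V" using C EV unfolding is_cycle_def by blast
      qed
      have "pg \<psi> C = f (last C) / f (hd C)"
        using pC ne CV fnz edge by (intro pg_tele) (auto elim!: successively_mono)
      moreover have "(last C, hd C) \<in> E"
      proof -
        have "(C ! (length C - 1), C ! (Suc (length C - 1) mod length C)) \<in> E"
          using C ne unfolding is_cycle_def by (metis diff_less length_greater_0_conv zero_less_one)
        moreover have "Suc (length C - 1) mod length C = 0" using ne by simp
        ultimately have "(C ! (length C - 1), C ! 0) \<in> E" by simp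
        then show ?thesis using ne by (simp add: last_conv_nth hd_conv_nth)
      qed
      moreover have "f (last C) \<noteq> 0" "f (hd C) \<noteq> 0"
        using CV fnz last_in_set[OF ne] hd_in_set[OF ne] by auto
      ultimately have "cycle_gain \<psi> C = 1"
        using cycle_gain_pg[OF ne] edge by simp
      then show "cycle_gain \<phi>1 C = cycle_gain \<phi>2 C" using eqiff[OF C] by simp
    qed
  next
    assume H: "\<forall>C. is_cycle E C \<longrightarrow> cycle_gain \<phi>1 C = cycle_gain \<phi>2 C"
    show "\<forall>C \<in> directed_fundamental_cycles E T r. cycle_gain \<phi>1 C = cycle_gain \<phi>2 C"
      using H fund unfolding directed_fundamental_cycles_def by blast
  qed
qed

end
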